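(* Let $A\in M_n(\mathbb{C})$ and suppose the Schur map $S_A\colon M_n(\mathbb{C})\to M_n(\mathbb{C})$, $S_A(B)=A\circ B$, is nonzero and multiplicative. Then the following are equivalent: (i) $S_A$ is $*$-preserving, i.e. $S_A(B^* )=S_A(B)^*$ for all $B$; (ii) $\|A\|=n$; (iii) $\frac{1}{n}A$ is an orthogonal projection; (iv) the operator norm of $S_A$ is $1$.
   Context: $A\circ B=(a_{ij}b_{ij})$ is the entrywise (Schur) product; multiplicative means $S_A(BC)=S_A(B)S_A(C)$ for all $B,C$. $\|A\|$ is the operator norm of $A$ on $\mathbb{C}^n$, and the norm of $S_A$ is its operator norm when $M_n(\mathbb{C})$ carries the operator norm on domain and range. *)

theory Defs
  imports "HOL-Analysis.Analysis"
begin

text \<open>n x n complex matrices are represented as complex^'n^'n, with n = CARD('n).\<close>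

definition schur :: "complex^'n^'n \<Rightarrow> complex^'n^'n \<Rightarrow> complex^'n^'n" where
  "schur A B = (\<chi> i j. A$i$j * B$i$j)"

definition cadj :: "complex^'n^'n \<Rightarrow> complex^'n^'n" where
  "cadj B = (\<chi> i j. cnj (B$j$i))"

definition opnorm :: "complex^'n^'n \<Rightarrow> real" where
  "opnorm M = onorm (\<lambda>x::complex^'n. M *v x)"

definition schur_map_norm :: "complex^'n^'n \<Rightarrow> real" where
  "schur_map_norm A = (SUP B\<in>{B::complex^'n^'n. opnorm B \<le> 1}. opnorm (schur A B))"

definition orth_proj :: "complex^'n^'n \<Rightarrow> bool" where
  "orth_proj P \<longleftrightarrow> P ** P = P \<and> cadj P = P"

end

theory Submission
  imports Defs
begin

lemma mv_bl: "bounded_linear (\<lambda>x::complex^'n. (M::complex^'n^'n) *v x)"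
proof -
  have "linear (\<lambda>x::complex^'n. M *v x)"
    by (rule linearI) (auto simp: matrix_vector_mult_def vec_eq_iff sum.distrib scaleR_sum_right algebra_simps)
  thus ?thesis using linear_conv_bounded_linear by blast
qed

lemma norm_sq_vec: "(norm (x::complex^'n))^2 = (\<Sum>i\<in>UNIV. (norm (x$i))^2)"
  unfolding norm_vec_def L2_set_def by (simp add: sum_nonneg)

definition E :: "'n \<Rightarrow> 'n \<Rightarrow> complex^'n^'n" where
 "E a b = (\<chi> p q. if p = a \<and> q = b then 1 else 0)"

lemma mult_entry:
  fixes A :: "complex^'n^'n"
  assumes mult: "\<forall>B C. schur A (B ** C) = schur A B ** schur A C"
  shows "A$i$k = A$i$j * A$j$k"
proof -
  have "schur A (E i j ** E j k) $i$k = (schur A (E i j) ** schur A (E j k))$i$k" using mult by simp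
  thus ?thesis by (simp add: schur_def matrix_matrix_mult_def E_def if_distrib cong: if_cong)
qed


lemma opnorm_ge: fixes M :: "complex^'n^'n" shows "norm (M *v x) \<le> opnorm M * norm x"
  unfolding opnorm_def by (rule onorm[OF mv_bl])

lemma opnorm_le: fixes M :: "complex^'n^'n" shows "0 \<le> b \<Longrightarrow> (\<And>x::complex^'n. norm (M *v x) \<le> b * norm x) \<Longrightarrow> opnorm M \<le> b"
  unfolding opnorm_def by (rule onorm_bound)

lemma opnorm_nonneg: fixes M :: "complex^'n^'n" shows "0 \<le> opnorm M"
  unfolding opnorm_def by (rule onorm_pos_le[OF mv_bl])

lemma norm_l1: "norm (x::complex^'n) \<le> (\<Sum>i\<in>UNIV. norm (x$i))"
  unfolding norm_vec_def by (rule L2_set_le_sum) auto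

lemma entry_le_opnorm: fixes M :: "complex^'n^'n" shows "norm (M$i$j) \<le> opnorm M"
proof -
  have "(M *v axis j 1) $ i = M$i$j"
    by (simp add: matrix_vector_mult_def axis_def if_distrib cong: if_cong)
  hence "norm (M$i$j) \<le> norm (M *v axis j 1)" using Finite_Cartesian_Product.norm_nth_le[of "M *v axis j 1" i] by simp
  also have "\<dots> \<le> opnorm M" using opnorm_ge[of M "axis j (1::complex)"] by (simp add: norm_axis_1)
  finally show ?thesis .
qed

lemma opnorm_le_sum: fixes M :: "complex^'n^'n" shows "opnorm M \<le> (\<Sum>i\<in>UNIV. \<Sum>j\<in>UNIV. norm (M$i$j))"
proof (rule opnorm_le)
  show "0 \<le> (\<Sum>i\<in>UNIV. \<Sum>j\<in>UNIV. norm (M$i$j))" by (simp add: sum_nonneg)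
  fix x :: "complex^'n"
  have "norm (M *v x) \<le> (\<Sum>i\<in>UNIV. norm ((M *v x)$i))" by (rule norm_l1)
  also have "\<dots> \<le> (\<Sum>i\<in>UNIV. \<Sum>j\<in>UNIV. norm (M$i$j) * norm x)"
  proof (rule sum_mono)
    fix i
    have "norm ((M *v x)$i) = norm (\<Sum>j\<in>UNIV. M$i$j * x$j)" by (simp add: matrix_vector_mult_def)
    also have "\<dots> \<le> (\<Sum>j\<in>UNIV. norm (M$i$j * x$j))" by (rule norm_sum)
    also have "\<dots> \<le> (\<Sum>j\<in>UNIV. norm (M$i$j) * norm x)"
      by (rule sum_mono) (simp add: norm_mult mult_left_mono Finite_Cartesian_Product.norm_nth_le)
    finally show "norm ((M *v x)$i) \<le> (\<Sum>j\<in>UNIV. norm (M$i$j) * norm x)" .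
  qed
  also have "\<dots> = (\<Sum>i\<in>UNIV. \<Sum>j\<in>UNIV. norm (M$i$j)) * norm x"
    by (simp add: sum_distrib_right)
  finally show "norm (M *v x) \<le> (\<Sum>i\<in>UNIV. \<Sum>j\<in>UNIV. norm (M$i$j)) * norm x" .
qed

lemma struct_facts:
  fixes A :: "complex^'n^'n"
  assumes nonzero: "schur A \<noteq> (\<lambda>B. 0)"
    and mult: "\<forall>B C. schur A (B ** C) = schur A B ** schur A C"
  shows "A$i$i = 1" "A$i$j * A$j$i = 1"
proof -
  obtain B where "schur A B \<noteq> 0" using nonzero by auto
  then obtain a b where "A$a$b * B$a$b \<noteq> 0" by (auto simp: schur_def vec_eq_iff)
  hence ab: "A$a$b \<noteq> 0" by auto
  have "A$a$b = A$a$i * A$i$b" by (rule mult_entry[OF mult])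
  hence ai: "A$a$i \<noteq> 0" using ab by auto
  have "A$a$i = A$a$i * A$i$i" by (rule mult_entry[OF mult])
  with ai show ii: "A$i$i = 1" by simp
  have "A$i$i = A$i$j * A$j$i" by (rule mult_entry[OF mult])
  with ii show "A$i$j * A$j$i = 1" by simp
qed


context
  fixes A :: "complex^'n^'n"
  assumes nonzero: "schur A \<noteq> (\<lambda>B. 0)"
    and mult: "\<forall>B C. schur A (B ** C) = schur A B ** schur A C"
begin

lemma diag1: "A$i$i = 1" using struct_facts[OF nonzero mult] by blast
lemma inv1: "A$i$j * A$j$i = 1" using struct_facts[OF nonzero mult] by blast
lemma me: "A$i$k = A$i$j * A$j$k" by (rule mult_entry[OF mult])
lemma nz: "A$i$j \<noteq> 0" using inv1[of i j] by auto
lemma ninv: "norm (A$i$j) * norm (A$j$i) = 1" using inv1[of i j] by (metis norm_mult norm_one)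

lemma star_iff: "(\<forall>B. schur A (cadj B) = cadj (schur A B)) \<longleftrightarrow> (\<forall>i j. A$i$j = cnj (A$j$i))"
proof
  assume h: "\<forall>B. schur A (cadj B) = cadj (schur A B)"
  show "\<forall>i j. A$i$j = cnj (A$j$i)"
  proof (intro allI)
    fix i j
    define X :: "complex^'n^'n" where "X = (\<chi> i j. 1)"
    have "schur A (cadj X) = cadj (schur A X)" using h by blast
    hence "schur A (cadj X) $i$j = cadj (schur A X) $i$j" by (rule arg_cong)
    thus "A$i$j = cnj (A$j$i)" by (simp add: schur_def cadj_def X_def)
  qed
next
  assume h: "\<forall>i j. A$i$j = cnj (A$j$i)"
  show "\<forall>B. schur A (cadj B) = cadj (schur A B)"
  proof
    fix B
    { fix i j have "A$i$j * cnj (B$j$i) = cnj (A$j$i * B$j$i)" using h[rule_format, of i j] by simp }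
    thus "schur A (cadj B) = cadj (schur A B)" by (simp add: schur_def cadj_def vec_eq_iff)
  qed
qed

lemma herm_iff: "(\<forall>i j. A$i$j = cnj (A$j$i)) \<longleftrightarrow> (\<forall>i j. norm (A$i$j) = 1)"
proof
  assume h: "\<forall>i j. A$i$j = cnj (A$j$i)"
  show "\<forall>i j. norm (A$i$j) = 1"
  proof (intro allI)
    fix i j
    have "cnj (A$i$j) = A$j$i" using h[rule_format, of j i] by simp
    hence "A$i$j * cnj (A$i$j) = 1" using inv1[of i j] by simp
    hence "complex_of_real ((norm (A$i$j))^2) = 1" by (simp only: complex_norm_square)
    hence "(norm (A$i$j))^2 = 1" by (metis of_real_eq_1_iff)
    thus "norm (A$i$j) = 1" using norm_ge_zero[of "A$i$j"] by (auto simp add: power2_eq_1_iff)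
  qed
next
  assume h: "\<forall>i j. norm (A$i$j) = 1"
  show "\<forall>i j. A$i$j = cnj (A$j$i)"
  proof (intro allI)
    fix i j
    have "A$j$i * cnj (A$j$i) = 1" using h complex_norm_square[of "A$j$i"] by simp
    moreover have "A$i$j * A$j$i = 1" by (rule inv1)
    moreover have "A$i$j * (A$j$i * cnj (A$j$i)) = (A$i$j * A$j$i) * cnj (A$j$i)" by (simp only: mult.assoc)
    ultimately show "A$i$j = cnj (A$j$i)" by (simp only: \<open>A$j$i * cnj (A$j$i) = 1\<close> \<open>A$i$j * A$j$i = 1\<close> mult_1_right mult_1_left)
  qed
qed

lemma proj_iff: "orth_proj (\<chi> i j. A$i$j / of_nat CARD('n)) \<longleftrightarrow> (\<forall>i j. A$i$j = cnj (A$j$i))"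
proof -
  let ?P = "(\<chi> i j. A$i$j / of_nat CARD('n)) :: complex^'n^'n"
  have n0: "(of_nat CARD('n) :: complex) \<noteq> 0" by simp
  have "?P ** ?P = ?P"
  proof -
    { fix i j
      have "(\<Sum>k\<in>UNIV. A$i$k / of_nat CARD('n) * (A$k$j / of_nat CARD('n)))
           = (\<Sum>k\<in>(UNIV::'n set). A$i$j / (of_nat CARD('n))^2)"
      proof (rule sum.cong)
        fix k :: 'n
        have "A$i$k * A$k$j = A$i$j" using me[where i=i and k=j and j=k] by simp
        thus "A$i$k / of_nat CARD('n) * (A$k$j / of_nat CARD('n)) = A$i$j / (of_nat CARD('n))^2"
          by (simp add: power2_eq_square)
      qed simp
      also have "\<dots> = A$i$j / of_nat CARD('n)" using n0 by (simp add: power2_eq_square)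
      finally have "(\<Sum>k\<in>UNIV. A$i$k / of_nat CARD('n) * (A$k$j / of_nat CARD('n))) = A$i$j / of_nat CARD('n)" . }
    thus ?thesis by (simp add: matrix_matrix_mult_def vec_eq_iff)
  qed
  moreover have "cadj ?P = ?P \<longleftrightarrow> (\<forall>i j. A$i$j = cnj (A$j$i))"
  proof -
    have "cadj ?P = ?P \<longleftrightarrow> (\<forall>i j. cnj (A$j$i) / of_nat CARD('n) = A$i$j / of_nat CARD('n))"
      by (simp add: cadj_def vec_eq_iff)
    also have "\<dots> \<longleftrightarrow> (\<forall>i j. A$i$j = cnj (A$j$i))" using n0 by (metis divide_cancel_right)
    finally show ?thesis .
  qed
  ultimately show ?thesis by (simp add: orth_proj_def)
qed

lemma opnorm_ge_n: "real CARD('n) \<le> opnorm A"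
proof -
  obtain k :: 'n where True by blast
  define x :: "complex^'n" where "x = (\<chi> j. A$j$k)"
  have "A *v x = real CARD('n) *\<^sub>R x"
  proof -
    { fix i
      have "(\<Sum>j\<in>UNIV. A$i$j * A$j$k) = (\<Sum>j\<in>(UNIV::'n set). A$i$k)"
        by (rule sum.cong) (simp_all add: me[where i=i and k=k and j=j for j, symmetric])
      also have "\<dots> = real CARD('n) *\<^sub>R A$i$k" by (simp add: scaleR_conv_of_real)
      finally have "(\<Sum>j\<in>UNIV. A$i$j * A$j$k) = real CARD('n) *\<^sub>R A$i$k" . }
    thus ?thesis by (simp add: matrix_vector_mult_def x_def vec_eq_iff)
  qed
  hence "norm (A *v x) = real CARD('n) * norm x" by simp
  moreover have "norm x > 0"
  proof -
    have "x$k = 1" by (simp add: x_def diag1)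
    hence "x \<noteq> 0" by auto
    thus ?thesis by simp
  qed
  ultimately show ?thesis using opnorm_ge[of A x] by simp
qed

lemma E_opnorm_le: assumes E: "\<forall>i j. norm (A$i$j) = 1" shows "opnorm A \<le> real CARD('n)"
proof (rule opnorm_le)
  show "0 \<le> real CARD('n)" by simp
  fix x :: "complex^'n"
  define s where "s = (\<Sum>j\<in>UNIV. norm (x$j))"
  have s0: "0 \<le> s" unfolding s_def by (simp add: sum_nonneg)
  have ci: "norm ((A *v x)$i) \<le> s" for i
  proof -
    have "norm ((A *v x)$i) = norm (\<Sum>j\<in>UNIV. A$i$j * x$j)" by (simp add: matrix_vector_mult_def)
    also have "\<dots> \<le> (\<Sum>j\<in>UNIV. norm (A$i$j * x$j))" by (rule norm_sum)
    also have "\<dots> = s" unfolding s_def using E by (simp add: norm_mult)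
    finally show ?thesis .
  qed
  have "s^2 \<le> (\<Sum>j\<in>UNIV. (norm (x$j))^2) * real CARD('n)"
    unfolding s_def by (rule sum_squared_le_sum_of_squares)
  hence s2: "s^2 \<le> (norm x)^2 * real CARD('n)" by (simp add: norm_sq_vec)
  have "(norm (A *v x))^2 = (\<Sum>i\<in>UNIV. (norm ((A *v x)$i))^2)" by (rule norm_sq_vec)
  also have "\<dots> \<le> (\<Sum>i\<in>(UNIV::'n set). s^2)"
    by (rule sum_mono) (use ci in \<open>simp add: power_mono\<close>)
  also have "\<dots> = real CARD('n) * s^2" by simp
  also have "\<dots> \<le> real CARD('n) * ((norm x)^2 * real CARD('n))"
    using s2 by (simp add: mult_left_mono)
  also have "\<dots> = (real CARD('n) * norm x)^2" by (simp add: power2_eq_square)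
  finally show "norm (A *v x) \<le> real CARD('n) * norm x"
    by (rule power2_le_imp_le) simp
qed

lemma opnorm_le_E: assumes le: "opnorm A \<le> real CARD('n)" shows "\<forall>i j. norm (A$i$j) = 1"
proof -
  obtain k :: 'n where True by blast
  define S where "S = (\<Sum>j\<in>UNIV. (norm (A$k$j))^2)"
  define X where "X = (\<Sum>i\<in>UNIV. (norm (A$i$k))^2)"
  define F where "F = (\<Sum>i\<in>UNIV. \<Sum>j\<in>UNIV. (norm (A$i$j))^2)"
  define v :: "complex^'n" where "v = (\<chi> j. cnj (A$k$j))"
  have Sge: "1 \<le> S"
  proof -
    have "(norm (A$k$k))^2 \<le> S" unfolding S_def by (rule member_le_sum) auto
    thus ?thesis by (simp add: diag1)
  qed
  have Av: "(A *v v)$i = A$i$k * of_real S" for i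
  proof -
    have "(A *v v)$i = (\<Sum>j\<in>UNIV. A$i$j * cnj (A$k$j))" by (simp add: matrix_vector_mult_def v_def)
    also have "\<dots> = (\<Sum>j\<in>UNIV. A$i$k * of_real ((norm (A$k$j))^2))"
    proof (rule sum.cong)
      fix j
      have "A$i$j = A$i$k * A$k$j" by (rule me)
      moreover have "A$k$j * cnj (A$k$j) = of_real ((norm (A$k$j))^2)" by (rule complex_norm_square[symmetric])
      ultimately show "A$i$j * cnj (A$k$j) = A$i$k * of_real ((norm (A$k$j))^2)"
        by (simp only: mult.assoc)
    qed simp
    also have "\<dots> = A$i$k * of_real S" by (simp add: S_def sum_distrib_left)
    finally show ?thesis .
  qed
  have nAv: "(norm (A *v v))^2 = X * S^2"
    by (simp add: norm_sq_vec Av norm_mult X_def sum_distrib_right power_mult_distrib abs_of_nonneg)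
  have nv: "(norm v)^2 = S" by (simp add: norm_sq_vec v_def S_def)
  have "norm (A *v v) \<le> real CARD('n) * norm v"
    using opnorm_ge[of A v] le by (meson mult_right_mono norm_ge_zero order_trans)
  hence "(norm (A *v v))^2 \<le> (real CARD('n) * norm v)^2" by (simp add: power_mono)
  hence "X * S^2 \<le> (real CARD('n))^2 * S" by (simp add: nAv power_mult_distrib nv)
  hence XS: "X * S \<le> (real CARD('n))^2" using Sge by (simp add: power2_eq_square)
  have "X * S = F"
  proof -
    have "X * S = (\<Sum>i\<in>UNIV. \<Sum>j\<in>UNIV. (norm (A$i$k))^2 * (norm (A$k$j))^2)"
      by (simp add: X_def S_def sum_distrib_left sum_distrib_right) (rule sum.swap)
    also have "\<dots> = F" unfolding F_def
    proof (intro sum.cong refl)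
      fix i j
      have "A$i$j = A$i$k * A$k$j" by (rule me)
      hence "norm (A$i$j) = norm (A$i$k) * norm (A$k$j)" by (simp add: norm_mult)
      thus "(norm (A$i$k))^2 * (norm (A$k$j))^2 = (norm (A$i$j))^2" by (simp add: power_mult_distrib)
    qed
    finally show ?thesis .
  qed
  with XS have Fle: "F \<le> (real CARD('n))^2" by simp
  define t where "t i j = (norm (A$i$j) - norm (A$j$i))^2" for i j
  have "(\<Sum>i\<in>UNIV. \<Sum>j\<in>UNIV. t i j) = (\<Sum>i\<in>UNIV. \<Sum>j\<in>UNIV. (norm (A$i$j))^2 + (norm (A$j$i))^2 - 2)"
    unfolding t_def by (intro sum.cong refl) (simp add: power2_diff ninv mult.assoc)
  also have "\<dots> = F + (\<Sum>i\<in>UNIV. \<Sum>j\<in>UNIV. (norm (A$j$i))^2) - 2 * (real CARD('n))^2"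
    by (simp add: F_def sum_subtractf sum.distrib power2_eq_square)
  also have "(\<Sum>i\<in>UNIV. \<Sum>j\<in>UNIV. (norm (A$j$i))^2) = F" unfolding F_def by (rule sum.swap)
  finally have tsum: "(\<Sum>i\<in>UNIV. \<Sum>j\<in>UNIV. t i j) \<le> 0" using Fle by simp
  show ?thesis
  proof (intro allI, rule ccontr)
    fix a b
    assume ne: "norm (A$a$b) \<noteq> 1"
    have "norm (A$a$b) \<noteq> norm (A$b$a)"
    proof
      assume eq: "norm (A$a$b) = norm (A$b$a)"
      have "norm (A$a$b) * norm (A$a$b) = 1" using ninv[of a b] eq by simp
      hence "(norm (A$a$b))^2 = 1" by (simp add: power2_eq_square)
      hence "norm (A$a$b) = 1" using norm_ge_zero[of "A$a$b"] by (auto simp add: power2_eq_1_iff)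
      with ne show False by simp
    qed
    hence tpos: "0 < t a b" unfolding t_def by simp
    have tnn: "0 \<le> t i j" for i j unfolding t_def by simp
    have "t a b \<le> (\<Sum>j\<in>UNIV. t a j)" by (rule member_le_sum) (auto simp: tnn)
    also have "\<dots> \<le> (\<Sum>i\<in>UNIV. \<Sum>j\<in>UNIV. t i j)" by (rule member_le_sum) (auto simp: tnn sum_nonneg)
    finally show False using tpos tsum by simp
  qed
qed

lemma E_schur_le: assumes E: "\<forall>i j. norm (A$i$j) = 1" shows "opnorm (schur A B) \<le> opnorm B"
proof (rule opnorm_le)
  show "0 \<le> opnorm B" by (rule opnorm_nonneg)
  obtain k :: 'n where True by blast
  fix x :: "complex^'n"
  define w :: "complex^'n" where "w = (\<chi> j. A$k$j * x$j)"
  have c: "(schur A B *v x)$i = A$i$k * (B *v w)$i" for i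
  proof -
    have "(schur A B *v x)$i = (\<Sum>j\<in>UNIV. A$i$j * B$i$j * x$j)" by (simp add: matrix_vector_mult_def schur_def)
    also have "\<dots> = (\<Sum>j\<in>UNIV. A$i$k * (B$i$j * (A$k$j * x$j)))"
    proof (rule sum.cong)
      fix j
      have "A$i$j = A$i$k * A$k$j" by (rule me)
      thus "A$i$j * B$i$j * x$j = A$i$k * (B$i$j * (A$k$j * x$j))" by (simp add: algebra_simps)
    qed simp
    also have "\<dots> = A$i$k * (B *v w)$i" by (simp add: matrix_vector_mult_def w_def sum_distrib_left)
    finally show ?thesis .
  qed
  have "(norm (schur A B *v x))^2 = (norm (B *v w))^2"
    by (simp add: norm_sq_vec c norm_mult E)
  hence "norm (schur A B *v x) = norm (B *v w)" by (simp add: power2_eq_iff_nonneg)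
  moreover have "(norm w)^2 = (norm x)^2" by (simp add: norm_sq_vec w_def norm_mult E)
  hence "norm w = norm x" by (simp add: power2_eq_iff_nonneg)
  ultimately show "norm (schur A B *v x) \<le> opnorm B * norm x" using opnorm_ge[of B w] by simp
qed

lemma schur_id: "schur A (mat 1) = mat 1"
  by (simp add: schur_def mat_def vec_eq_iff diag1)

end

lemma opnorm_id: "opnorm (mat 1 :: complex^'n^'n) = 1"
proof (rule antisym)
  show "opnorm (mat 1 :: complex^'n^'n) \<le> 1" by (rule opnorm_le) auto
  obtain k :: 'n where True by blast
  show "1 \<le> opnorm (mat 1 :: complex^'n^'n)"
    using opnorm_ge[of "mat 1 :: complex^'n^'n" "axis k 1"] by (simp add: norm_axis_1)
qed

lemma opnorm_E: "opnorm (E a b :: complex^'n^'n) \<le> 1"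
proof (rule opnorm_le)
  fix x :: "complex^'n"
  have "(E a b *v x) = (\<chi> i. if i = a then x$b else 0)"
  proof -
    { fix i
      have "(\<Sum>j\<in>UNIV. (if i = a \<and> j = b then 1 else 0) * x$j) = (\<Sum>j\<in>UNIV. if j = b then (if i = a then x$b else 0) else 0)"
        by (rule sum.cong) auto
      also have "\<dots> = (if i = a then x$b else 0)" by simp
      finally have "(\<Sum>j\<in>UNIV. (if i = a \<and> j = b then 1 else 0) * x$j) = (if i = a then x$b else 0)" . }
    thus ?thesis by (simp add: E_def matrix_vector_mult_def vec_eq_iff)
  qed
  hence "(norm (E a b *v x))^2 = (norm (x$b))^2"
  proof -
    have "(\<Sum>i\<in>UNIV. (norm ((\<chi> i. if i = a then x$b else 0) $ i))^2) = (\<Sum>i\<in>UNIV. if i = a then (norm (x$b))^2 else 0)"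
      by (rule sum.cong) auto
    thus ?thesis using \<open>E a b *v x = _\<close> by (simp add: norm_sq_vec)
  qed
  hence "norm (E a b *v x) = norm (x$b)" by (simp add: power2_eq_iff_nonneg)
  thus "norm (E a b *v x) \<le> 1 * norm x" using Finite_Cartesian_Product.norm_nth_le[of x b] by simp
qed simp

lemma smn_bdd: "bdd_above ((\<lambda>B. opnorm (schur A B)) ` {B::complex^'n^'n. opnorm B \<le> 1})"
proof (rule bdd_aboveI2)
  fix B :: "complex^'n^'n" assume "B \<in> {B. opnorm B \<le> 1}"
  hence B1: "opnorm B \<le> 1" by simp
  have "opnorm (schur A B) \<le> (\<Sum>i\<in>UNIV. \<Sum>j\<in>UNIV. norm (schur A B $i$j))" by (rule opnorm_le_sum)
  also have "\<dots> \<le> (\<Sum>i\<in>UNIV. \<Sum>j\<in>UNIV. norm (A$i$j))"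
  proof (intro sum_mono)
    fix i j
    have "norm (B$i$j) \<le> 1" using entry_le_opnorm[of B i j] B1 by simp
    thus "norm (schur A B $i$j) \<le> norm (A$i$j)"
      by (simp add: schur_def norm_mult mult_left_le)
  qed
  finally show "opnorm (schur A B) \<le> (\<Sum>i\<in>UNIV. \<Sum>j\<in>UNIV. norm (A$i$j))" .
qed

theorem proposition2p5:
  fixes A :: "complex^'n^'n"
  assumes nonzero: "schur A \<noteq> (\<lambda>B. 0)"
    and mult: "\<forall>B C. schur A (B ** C) = schur A B ** schur A C"
  shows "((\<forall>B. schur A (cadj B) = cadj (schur A B)) \<longleftrightarrow> opnorm A = real CARD('n))
       \<and> (opnorm A = real CARD('n) \<longleftrightarrow> orth_proj (\<chi> i j. A$i$j / of_nat CARD('n)))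
       \<and> (orth_proj (\<chi> i j. A$i$j / of_nat CARD('n)) \<longleftrightarrow> schur_map_norm A = 1)"
proof -
  let ?EE = "\<forall>i j. norm (A$i$j) = 1"
  have s1: "(\<forall>B. schur A (cadj B) = cadj (schur A B)) \<longleftrightarrow> ?EE"
    using star_iff[OF nonzero mult] herm_iff[OF nonzero mult] by simp
  have s3: "orth_proj (\<chi> i j. A$i$j / of_nat CARD('n)) \<longleftrightarrow> ?EE"
    using proj_iff[OF nonzero mult] herm_iff[OF nonzero mult] by simp
  have s2: "opnorm A = real CARD('n) \<longleftrightarrow> ?EE"
    using opnorm_le_E[OF nonzero mult] E_opnorm_le[OF nonzero mult] opnorm_ge_n[OF nonzero mult]
    by (metis order_refl antisym)
  have s4: "schur_map_norm A = 1 \<longleftrightarrow> ?EE"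
  proof
    assume h: "schur_map_norm A = 1"
    have le1: "norm (A$a$b) \<le> 1" for a b
    proof -
      have "norm (A$a$b) = norm (schur A (E a b) $a$b)" by (simp add: schur_def E_def)
      also have "\<dots> \<le> opnorm (schur A (E a b))" by (rule entry_le_opnorm)
      also have "\<dots> \<le> schur_map_norm A" unfolding schur_map_norm_def
        by (rule cSUP_upper[OF _ smn_bdd]) (simp add: opnorm_E)
      finally show ?thesis using h by simp
    qed
    show ?EE
    proof (intro allI)
      fix a b
      have "1 = norm (A$a$b) * norm (A$b$a)" using ninv[OF nonzero mult, of a b] by simp
      also have "\<dots> \<le> norm (A$a$b)" using le1[of b a] by (simp add: mult_left_le)
      finally show "norm (A$a$b) = 1" using le1[of a b] by simp
    qed
  next
    assume E: ?EE
    show "schur_map_norm A = 1" unfolding schur_map_norm_def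
    proof (rule antisym)
      show "(SUP B\<in>{B::complex^'n^'n. opnorm B \<le> 1}. opnorm (schur A B)) \<le> 1"
      proof (rule cSUP_least)
        show "{B::complex^'n^'n. opnorm B \<le> 1} \<noteq> {}" proof -
          have "(mat 1 :: complex^'n^'n) \<in> {B. opnorm B \<le> 1}" by (simp add: opnorm_id)
          thus ?thesis by blast
        qed
        fix B :: "complex^'n^'n" assume "B \<in> {B. opnorm B \<le> 1}"
        thus "opnorm (schur A B) \<le> 1" using E_schur_le[OF nonzero mult E, of B] by simp
      qed
      have "1 = opnorm (schur A (mat 1))" by (simp add: schur_id[OF nonzero mult] opnorm_id)
      also have "\<dots> \<le> (SUP B\<in>{B::complex^'n^'n. opnorm B \<le> 1}. opnorm (schur A B))"
        by (rule cSUP_upper[OF _ smn_bdd]) (simp add: opnorm_id)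
      finally show "1 \<le> (SUP B\<in>{B::complex^'n^'n. opnorm B \<le> 1}. opnorm (schur A B))" .
    qed
  qed
  show ?thesis using s1 s2 s3 s4 by blast
qed

end
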